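(* Let $\preceq$ be a binary relation on $L$. Then $\preceq$ is an E-relation if and only if $\preceq\, =\, \preceq_{\vec{\mathcal U}}$ for some $\vec{\mathcal U} \in \Upsilon$.
   Context: $L$ is a propositional language built from a finite set of propositional variables with the connectives $\neg,\wedge,\vee,\rightarrow,\top,\bot$; $W$ is the finite set of propositional worlds (truth assignments). For $\theta\in L$, $S_\theta=\{w\in W\mid w\models\theta\}$. For $E\cup\{\phi\}\subseteq L$, $E\models\phi$ means $\bigcap_{\theta\in E}S_\theta\subseteq S_\phi$; $\theta\models\phi$ means $\{\theta\}\models\phi$, and $\models\phi$ means $\emptyset\models\phi$. Sequences: consider finite sequences $\vec{\mathcal U}=(\mathcal U_0,\ldots,\mathcal U_k)$ ($k\ge 0$) of mutually disjoint subsets of $W$ (components may be empty, and $\emptyset$ may occur several times). For $\theta\in L$, $\mathrm{rank}^{\vec{\mathcal U}}(\theta)$ is the least $i$ with $\mathcal U_i\cap S_\theta\neq\emptyset$, and $\infty$ if there is no such $i$ (with $i<\infty$ for every integer $i$). Define $\theta\mid\!\sim_{\vec{\mathcal U}}\phi$ iff either $\mathrm{rank}^{\vec{\mathcal U}}(\theta)<\mathrm{rank}^{\vec{\mathcal U}}(\theta\wedge\neg\phi)$ or $\mathrm{rank}^{\vec{\mathcal U}}(\theta)=\infty$. $\vec{\mathcal U}$ is full iff $\bigcup_i\mathcal U_i=W$, and empty iff $\bigcup_i\mathcal U_i=\emptyset$; $\Upsilon$ is the set of all such sequences which are full or empty. For $\vec{\mathcal U}\in\Upsilon$ define $\preceq_{\vec{\mathcal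 U}}$ on $L$ by: $\theta\preceq_{\vec{\mathcal U}}\phi$ iff (it is not the case that $\neg\theta\vee\neg\phi\mid\!\sim_{\vec{\mathcal U}}\theta$) or $\neg\phi\mid\!\sim_{\vec{\mathcal U}}\bot$. An E-relation (epistemic entrenchment relation) is a relation $\preceq\subseteq L\times L$ such that for all $\theta,\phi,\psi\in L$: (E1) if $\theta\preceq\phi$ and $\phi\preceq\psi$ then $\theta\preceq\psi$; (E2) if $\theta\models\phi$ then $\theta\preceq\phi$; (E3) $\theta\preceq\theta\wedge\phi$ or $\phi\preceq\theta\wedge\phi$; (E4) if there exists $\psi\in L$ with $\bot\prec\psi$, then whenever $\theta\preceq\phi$ for all $\theta\in L$, we have $\models\phi$. Here $\prec$ is the strict part: $\theta\prec\phi$ iff $\theta\preceq\phi$ and not $\phi\preceq\theta$. *)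

theory Defs
  imports Main "HOL-Library.Extended_Nat"
begin

datatype 'v form =
    Var 'v
  | Neg "'v form"
  | Conj "'v form" "'v form"
  | Disj "'v form" "'v form"
  | Imp "'v form" "'v form"
  | Top
  | Bot

text \<open>Worlds are truth assignments 'v \<Rightarrow> bool; W is UNIV.\<close>
type_synonym 'v world = "'v \<Rightarrow> bool"

fun sat :: "'v world \<Rightarrow> 'v form \<Rightarrow> bool" where
  "sat w (Var p) = w p"
| "sat w (Neg a) = (\<not> sat w a)"
| "sat w (Conj a b) = (sat w a \<and> sat w b)"
| "sat w (Disj a b) = (sat w a \<or> sat w b)"
| "sat w (Imp a b) = (sat w a \<longrightarrow> sat w b)"
| "sat w Top = True"
| "sat w Bot = False"

definition S :: "'v form \<Rightarrow> 'v world set" where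
  "S \<theta> = {w. sat w \<theta>}"

definition entails :: "'v form \<Rightarrow> 'v form \<Rightarrow> bool" where
  "entails \<theta> \<phi> \<longleftrightarrow> S \<theta> \<subseteq> S \<phi>"

definition valid :: "'v form \<Rightarrow> bool" where
  "valid \<phi> \<longleftrightarrow> S \<phi> = UNIV"

definition is_seq :: "'v world set list \<Rightarrow> bool" where
  "is_seq U \<longleftrightarrow> U \<noteq> [] \<and> (\<forall>i<length U. \<forall>j<length U. i \<noteq> j \<longrightarrow> U!i \<inter> U!j = {})"

definition rank :: "'v world set list \<Rightarrow> 'v form \<Rightarrow> enat" where
  "rank U \<theta> = (if \<exists>i<length U. U!i \<inter> S \<theta> \<noteq> {}
                 then enat (LEAST i. i < length U \<and> U!i \<inter> S \<theta> \<noteq> {})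
                 else \<infinity>)"

definition nmon :: "'v world set list \<Rightarrow> 'v form \<Rightarrow> 'v form \<Rightarrow> bool" where
  "nmon U \<theta> \<phi> \<longleftrightarrow> rank U \<theta> < rank U (Conj \<theta> (Neg \<phi>)) \<or> rank U \<theta> = \<infinity>"

definition Upsilon :: "'v world set list set" where
  "Upsilon = {U. is_seq U \<and> (\<Union>(set U) = UNIV \<or> \<Union>(set U) = {})}"

definition entr_of :: "'v world set list \<Rightarrow> 'v form \<Rightarrow> 'v form \<Rightarrow> bool" where
  "entr_of U \<theta> \<phi> \<longleftrightarrow> \<not> nmon U (Disj (Neg \<theta>) (Neg \<phi>)) \<theta> \<or> nmon U (Neg \<phi>) Bot"

definition strict :: "('a \<Rightarrow> 'a \<Rightarrow> bool) \<Rightarrow> 'a \<Rightarrow> 'a \<Rightarrow> bool" where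
  "strict R x y \<longleftrightarrow> R x y \<and> \<not> R y x"

definition E_relation :: "('v form \<Rightarrow> 'v form \<Rightarrow> bool) \<Rightarrow> bool" where
  "E_relation R \<longleftrightarrow>
     (\<forall>\<theta> \<phi> \<psi>. R \<theta> \<phi> \<and> R \<phi> \<psi> \<longrightarrow> R \<theta> \<psi>) \<and>
     (\<forall>\<theta> \<phi>. entails \<theta> \<phi> \<longrightarrow> R \<theta> \<phi>) \<and>
     (\<forall>\<theta> \<phi>. R \<theta> (Conj \<theta> \<phi>) \<or> R \<phi> (Conj \<theta> \<phi>)) \<and>
     ((\<exists>\<psi>. strict R Bot \<psi>) \<longrightarrow> (\<forall>\<phi>. (\<forall>\<theta>. R \<theta> \<phi>) \<longrightarrow> valid \<phi>))"

end

theory Submission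
  imports Defs
begin

lemma S_simps[simp]:
  "S (Neg a) = - S a" "S (Conj a b) = S a \<inter> S b" "S (Disj a b) = S a \<union> S b"
  "S Top = UNIV" "S Bot = {}"
  by (auto simp: S_def)

definition rk :: "'a set list \<Rightarrow> 'a set \<Rightarrow> enat" where
  "rk U X = (if \<exists>i<length U. U!i \<inter> X \<noteq> {}
                 then enat (LEAST i. i < length U \<and> U!i \<inter> X \<noteq> {}) else \<infinity>)"

lemma rank_rk: "rank U \<theta> = rk U (S \<theta>)"
  by (simp add: rank_def rk_def)

lemma Least_disj:
  fixes P Q :: "nat \<Rightarrow> bool"
  assumes "\<exists>x. P x" "\<exists>x. Q x"
  shows "(LEAST i. P i \<or> Q i) = min (LEAST i. P i) (LEAST i. Q i)"
proof (rule Least_equality)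
  show "P (min (Least P) (Least Q)) \<or> Q (min (Least P) (Least Q))"
    using LeastI_ex[OF assms(1)] LeastI_ex[OF assms(2)] by (simp add: min_def)
next
  fix y assume "P y \<or> Q y"
  then show "min (Least P) (Least Q) \<le> y"
    by (metis Least_le min.coboundedI1 min.coboundedI2)
qed

lemma rk_Un: "rk U (A \<union> B) = min (rk U A) (rk U B)"
proof -
  have e: "(U!i \<inter> (A \<union> B) \<noteq> {}) = (U!i \<inter> A \<noteq> {} \<or> U!i \<inter> B \<noteq> {})" for i by auto
  show ?thesis
  proof (cases "\<exists>i<length U. U!i \<inter> A \<noteq> {}")
    case a: True
    show ?thesis
    proof (cases "\<exists>i<length U. U!i \<inter> B \<noteq> {}")
      case b: True
      have "(LEAST i. i < length U \<and> U!i \<inter> (A \<union> B) \<noteq> {})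
         = (LEAST i. (i < length U \<and> U!i \<inter> A \<noteq> {}) \<or> (i < length U \<and> U!i \<inter> B \<noteq> {}))"
        unfolding e by metis
      also have "\<dots> = min (LEAST i. i < length U \<and> U!i \<inter> A \<noteq> {}) (LEAST i. i < length U \<and> U!i \<inter> B \<noteq> {})"
        using a b by (intro Least_disj) auto
      finally show ?thesis using a b unfolding rk_def e by auto
    next
      case b: False
      have "(\<lambda>i. i < length U \<and> U!i \<inter> (A \<union> B) \<noteq> {}) = (\<lambda>i. i < length U \<and> U!i \<inter> A \<noteq> {})"
        using b by (auto simp: fun_eq_iff)
      then show ?thesis using a b unfolding rk_def by (auto simp: min_def)
    qed
  next
    case a: False
    have "(\<lambda>i. i < length U \<and> U!i \<inter> (A \<union> B) \<noteq> {}) = (\<lambda>i. i < length U \<and> U!i \<inter> B \<noteq> {})"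
      using a by (auto simp: fun_eq_iff)
    then show ?thesis using a unfolding rk_def by (auto simp: min_def)
  qed
qed

lemma rk_inf: "rk U X = \<infinity> \<longleftrightarrow> X \<inter> \<Union>(set U) = {}"
proof -
  have "(\<exists>i<length U. U!i \<inter> X \<noteq> {}) \<longleftrightarrow> X \<inter> \<Union>(set U) \<noteq> {}"
  proof
    assume "\<exists>i<length U. U!i \<inter> X \<noteq> {}"
    then show "X \<inter> \<Union>(set U) \<noteq> {}" using nth_mem by fastforce
  next
    assume "X \<inter> \<Union>(set U) \<noteq> {}"
    then obtain x A where "x \<in> X" "A \<in> set U" "x \<in> A" by blast
    then show "\<exists>i<length U. U!i \<inter> X \<noteq> {}" by (metis in_set_conv_nth disjoint_iff)
  qed
  then show ?thesis unfolding rk_def by auto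
qed

lemma entr_char: "entr_of U \<theta> \<phi> \<longleftrightarrow> rk U (- S \<theta>) \<le> rk U (- S \<phi>)"
proof -
  have e: "(- S \<theta> \<union> - S \<phi>) \<inter> - S \<theta> = - S \<theta>" by auto
  show ?thesis
    unfolding entr_of_def nmon_def rank_rk S_simps e rk_Un
    by (cases "rk U (- S \<theta>)"; cases "rk U (- S \<phi>)") (auto simp: min_def)
qed


lemma chi_ex: "\<exists>\<chi>. S \<chi> = {w::('v::finite) world}"
proof -
  obtain xs where xs: "set xs = (UNIV::'v set)" using finite_list[OF finite_UNIV] by (elim exE)
  define f where "f ys = foldr (\<lambda>p acc. Conj (if w p then Var p else Neg (Var p)) acc) ys Top" for ys
  have sf: "sat v (f ys) \<longleftrightarrow> (\<forall>p\<in>set ys. v p = w p)" for v ys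
    unfolding f_def by (induction ys) auto
  have "v \<in> S (f xs) \<longleftrightarrow> v = w" for v
  proof -
    have "v \<in> S (f xs) \<longleftrightarrow> (\<forall>p. v p = w p)" unfolding S_def using sf[of v xs] xs by simp
    also have "\<dots> \<longleftrightarrow> v = w" by (simp add: fun_eq_iff)
    finally show ?thesis .
  qed
  then have "S (f xs) = {w}" by blast
  then show ?thesis by blast
qed

definition chi :: "('v::finite) world \<Rightarrow> 'v form" where
  "chi w = (SOME \<chi>. S \<chi> = {w})"

lemma S_chi[simp]: "S (chi w) = {w}"
  unfolding chi_def by (rule someI_ex[OF chi_ex])

definition cw :: "('v::finite) world \<Rightarrow> 'v form" where
  "cw w = Neg (chi w)"

lemma S_cw[simp]: "S (cw w) = - {w}"
  by (simp add: cw_def)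

context
  fixes R :: "('v::finite) form \<Rightarrow> 'v form \<Rightarrow> bool"
  assumes E: "E_relation R"
begin

lemma Rtrans: "R a b \<Longrightarrow> R b c \<Longrightarrow> R a c"
  using E unfolding E_relation_def by blast

lemma Rent: "S a \<subseteq> S b \<Longrightarrow> R a b"
  using E unfolding E_relation_def entails_def by blast

lemma RE3: "R a (Conj a b) \<or> R b (Conj a b)"
  using E unfolding E_relation_def by blast

lemma RE4: "\<exists>\<psi>. strict R Bot \<psi> \<Longrightarrow> (\<forall>\<theta>. R \<theta> \<phi>) \<Longrightarrow> valid \<phi>"
  using E unfolding E_relation_def by blast

lemma Rconn: "R a b \<or> R b a"
proof -
  have "R (Conj a b) b" "R (Conj a b) a" by (auto intro: Rent)
  then show ?thesis using RE3[of a b] Rtrans by blast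
qed

lemma Rcong1: "S a = S b \<Longrightarrow> R a c \<longleftrightarrow> R b c"
  by (metis Rent Rtrans order_refl)

lemma Rcong2: "S a = S b \<Longrightarrow> R c a \<longleftrightarrow> R c b"
  by (metis Rent Rtrans order_refl)

lemma keyK: "\<forall>\<theta>. - S \<theta> = (X :: 'v world set) \<longrightarrow> X \<noteq> {} \<longrightarrow> (\<exists>w\<in>X. R (cw w) \<theta>)"
proof -
  have fin: "finite X" by simp
  show ?thesis using fin
  proof (induction X rule: finite_induct)
    case empty
    then show ?case by simp
  next
    case (insert w F)
    show ?case
    proof (intro allI impI)
      fix \<theta> assume th: "- S \<theta> = insert w F"
      show "\<exists>x\<in>insert w F. R (cw x) \<theta>"
      proof (cases "F = {}")
        case True
        then have "S \<theta> = S (cw w)" using th by auto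
        then show ?thesis using Rent by blast
      next
        case False
        define t1 where "t1 = Disj \<theta> (chi w)"
        have "- S t1 = F" using th insert(2) unfolding t1_def by auto
        then obtain w' where w': "w' \<in> F" "R (cw w') t1" using insert(3) False by blast
        have eq: "S (Conj t1 (cw w)) = S \<theta>" using th unfolding t1_def by auto
        from RE3[of t1 "cw w"] have "R t1 \<theta> \<or> R (cw w) \<theta>"
          using Rcong2[OF eq] by blast
        then show ?thesis using w' Rtrans by blast
      qed
    qed
  qed
qed

lemma key: "- S \<theta> \<noteq> {} \<Longrightarrow> \<exists>w. w \<notin> S \<theta> \<and> R (cw w) \<theta>"
  using keyK by blast

definition r :: "'v world \<Rightarrow> nat" where
  "r w = card {w'. strict R (cw w') (cw w)}"

lemma r_le: "r w \<le> r w' \<longleftrightarrow> R (cw w) (cw w')"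
proof
  assume h: "r w \<le> r w'"
  show "R (cw w) (cw w')"
  proof (rule ccontr)
    assume n: "\<not> R (cw w) (cw w')"
    then have "R (cw w') (cw w)" using Rconn by blast
    have "{x. strict R (cw x) (cw w')} \<subset> {x. strict R (cw x) (cw w)}"
    proof
      show "{x. strict R (cw x) (cw w')} \<subseteq> {x. strict R (cw x) (cw w)}"
        using n \<open>R (cw w') (cw w)\<close> Rtrans unfolding strict_def by blast
      show "{x. strict R (cw x) (cw w')} \<noteq> {x. strict R (cw x) (cw w)}"
        using n \<open>R (cw w') (cw w)\<close> unfolding strict_def by blast
    qed
    then have "r w' < r w" unfolding r_def by (simp add: psubset_card_mono)
    then show False using h by simp
  qed
next
  assume h: "R (cw w) (cw w')"
  have "{x. strict R (cw x) (cw w)} \<subseteq> {x. strict R (cw x) (cw w')}"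
    using h Rtrans unfolding strict_def by blast
  then show "r w \<le> r w'" unfolding r_def by (simp add: card_mono)
qed

lemma r_lt: "r w < card (UNIV :: 'v world set)"
proof -
  have "{x. strict R (cw x) (cw w)} \<subset> UNIV" unfolding strict_def by blast
  then show ?thesis unfolding r_def by (simp add: psubset_card_mono)
qed

definition UR :: "'v world set list" where
  "UR = map (\<lambda>i. {w. r w = i}) [0..<card (UNIV :: 'v world set)]"

lemma rk_UR: "rk UR X = (if X = {} then \<infinity> else enat (Min (r ` X)))"
proof (cases "X = {}")
  case True
  then show ?thesis unfolding rk_def by simp
next
  case False
  then obtain x where x: "x \<in> X" by blast
  have "UR ! (r x) \<inter> X \<noteq> {}" "r x < length UR"
    using x r_lt[of x] unfolding UR_def by auto
  then have ex: "\<exists>i<length UR. UR!i \<inter> X \<noteq> {}" by blast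
  have "(LEAST i. i < length UR \<and> UR!i \<inter> X \<noteq> {}) = Min (r ` X)"
  proof (rule Least_equality)
    have "Min (r ` X) \<in> r ` X" using False by simp
    then show "Min (r ` X) < length UR \<and> UR ! Min (r ` X) \<inter> X \<noteq> {}"
      using r_lt unfolding UR_def by auto
  next
    fix y assume "y < length UR \<and> UR ! y \<inter> X \<noteq> {}"
    then have "\<exists>z\<in>X. r z = y" unfolding UR_def by auto
    then obtain z where "z \<in> X" "r z = y" by blast
    then show "Min (r ` X) \<le> y" by auto
  qed
  then show ?thesis using ex False unfolding rk_def by simp
qed

lemma UR_Upsilon: "UR \<in> Upsilon"
proof -
  have "card (UNIV :: 'v world set) > 0" by (simp add: card_gt_0_iff)
  then have ne: "UR \<noteq> []" unfolding UR_def by simp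
  have dj: "\<forall>i<length UR. \<forall>j<length UR. i \<noteq> j \<longrightarrow> UR!i \<inter> UR!j = {}"
    unfolding UR_def by auto
  have "\<Union>(set UR) = UNIV"
  proof -
    have "w \<in> \<Union>(set UR)" for w
      using r_lt[of w] unfolding UR_def by auto
    then show ?thesis by blast
  qed
  then show ?thesis using ne dj unfolding Upsilon_def is_seq_def by blast
qed

lemma main_B:
  assumes st: "\<exists>\<psi>. strict R Bot \<psi>"
  shows "R \<theta> \<phi> \<longleftrightarrow> rk UR (- S \<theta>) \<le> rk UR (- S \<phi>)"
proof -
  have nv: "- S a \<noteq> {} \<Longrightarrow> \<not> R Top a" for a
  proof
    assume "- S a \<noteq> {}" "R Top a"
    then have "\<forall>t. R t a" using Rent Rtrans by (metis S_simps(4) top_greatest)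
    then have "valid a" using RE4[OF st] by blast
    then show False using \<open>- S a \<noteq> {}\<close> unfolding valid_def by simp
  qed
  have mn: "\<exists>w0. w0 \<in> - S a \<and> R (cw w0) a \<and> R a (cw w0) \<and> Min (r ` (- S a)) = r w0"
    if ne: "- S a \<noteq> {}" for a
  proof -
    obtain w0 where w0: "w0 \<notin> S a" "R (cw w0) a" using key[OF ne] by blast
    have le: "R a (cw w)" if "w \<in> - S a" for w using that by (intro Rent) auto
    have "Min (r ` (- S a)) = r w0"
    proof (rule Min_eqI)
      show "finite (r ` (- S a))" by simp
      show "r w0 \<in> r ` (- S a)" using w0 by auto
      fix y assume "y \<in> r ` (- S a)"
      then obtain w where "w \<in> - S a" "y = r w" by auto
      then show "r w0 \<le> y" using r_le le w0 Rtrans by blast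
    qed
    then show ?thesis using w0 le by auto
  qed
  show ?thesis
  proof (cases "- S \<theta> = {}")
    case t: True
    show ?thesis
    proof (cases "- S \<phi> = {}")
      case True
      then show ?thesis using t by (auto simp: rk_UR intro: Rent)
    next
      case False
      have "\<not> R \<theta> \<phi>" using nv[OF False] Rcong1[of \<theta> Top] t by auto
      then show ?thesis using t False by (simp add: rk_UR)
    qed
  next
    case t: False
    show ?thesis
    proof (cases "- S \<phi> = {}")
      case True
      then show ?thesis using t by (auto simp: rk_UR intro: Rent)
    next
      case False
      obtain w0 where w0: "R (cw w0) \<theta>" "R \<theta> (cw w0)" "Min (r ` (- S \<theta>)) = r w0"
        using mn[OF t] by blast
      obtain w1 where w1: "R (cw w1) \<phi>" "R \<phi> (cw w1)" "Min (r ` (- S \<phi>)) = r w1"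
        using mn[OF False] by blast
      have "R \<theta> \<phi> \<longleftrightarrow> R (cw w0) (cw w1)" using w0 w1 Rtrans by blast
      then show ?thesis using t False w0 w1 r_le by (simp add: rk_UR)
    qed
  qed
qed

end

theorem proposition3:
  fixes R :: "('v::finite) form \<Rightarrow> 'v form \<Rightarrow> bool"
  shows "E_relation R \<longleftrightarrow> (\<exists>U\<in>Upsilon. R = entr_of U)"
proof
  assume E: "E_relation R"
  show "\<exists>U\<in>Upsilon. R = entr_of U"
  proof (cases "\<exists>\<psi>. strict R Bot \<psi>")
    case True
    have "R a b \<longleftrightarrow> entr_of (UR R) a b" for a b
      unfolding entr_char by (rule main_B[OF E True])
    then have "R = entr_of (UR R)" by (simp add: fun_eq_iff)
    show ?thesis
    proof (rule bexI)
      show "R = entr_of (UR R)" by fact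
      show "UR R \<in> Upsilon" by (rule UR_Upsilon[OF E])
    qed
  next
    case False
    have all: "R a b" for a b
    proof -
      have "R Bot a" "R Bot b" using Rent[OF E, of Bot] by simp_all
      then have "R a Bot" using False unfolding strict_def by blast
      then show ?thesis using Rtrans[OF E, OF _ \<open>R Bot b\<close>] by simp
    qed
    have e: "entr_of [{}] a b" for a b :: "'v form"
      unfolding entr_char rk_def by simp
    have "R = entr_of [{}]"
    proof (intro ext)
      fix a b show "R a b = entr_of [{}] a b" using all[of a b] e[of a b] by simp
    qed
    show ?thesis
    proof (rule bexI)
      show "R = entr_of [{}]" by fact
      show "[{}] \<in> Upsilon" unfolding Upsilon_def is_seq_def by simp
    qed
  qed
next
  assume "\<exists>U\<in>Upsilon. R = entr_of U"
  then obtain U where U: "U \<in> Upsilon" "R = entr_of U" by blast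
  have R: "R a b \<longleftrightarrow> rk U (- S a) \<le> rk U (- S b)" for a b :: "'v form"
    using U(2) entr_char by metis
  show "E_relation R"
    unfolding E_relation_def
  proof (intro conjI allI impI)
    fix a b c :: "'v form" assume "R a b \<and> R b c" then show "R a c" unfolding R by (meson order_trans)
  next
    fix a b :: "'v form" assume "entails a b"
    then have "- S b \<subseteq> - S a" unfolding entails_def by auto
    then have "- S a = - S a \<union> - S b" by auto
    then have "rk U (- S a) = min (rk U (- S a)) (rk U (- S b))" using rk_Un by metis
    then show "R a b" unfolding R by (metis min.cobounded2)
  next
    fix a b :: "'v form"
    have e: "- S (Conj a b) = - S a \<union> - S b" by auto
    show "R a (Conj a b) \<or> R b (Conj a b)" unfolding R e rk_Un by (simp add: min_def)
  next
    fix \<phi> :: "'v form" assume st: "\<exists>\<psi>. strict R Bot \<psi>" and all: "\<forall>\<theta>. R \<theta> \<phi>"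
    from st obtain \<psi> where "strict R Bot \<psi>" by blast
    then have "rk U UNIV < rk U (- S \<psi>)" unfolding strict_def R by auto
    then have "rk U UNIV \<noteq> \<infinity>" using enat_ord_simps(6) by (metis less_infinityE not_less_iff_gr_or_eq)
    then have full: "\<Union>(set U) = UNIV" using U(1) rk_inf[of U UNIV] unfolding Upsilon_def by auto
    have "rk U (- S \<phi>) = \<infinity>" using all[rule_format, of Top] unfolding R by (simp add: rk_def)
    then have "- S \<phi> = {}" using rk_inf[of U "- S \<phi>"] full by simp
    then show "valid \<phi>" unfolding valid_def by auto
  qed
qed

end
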